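(* Consider the WKD-IBE construction and signature algorithm described in the context, with fixed public parameters $\mathsf{Params}=(g,g_1,g_2,g_3,h_1,\dots,h_\ell,h_s)$ and master secret $\alpha$. For any pattern $S$, any two well-formed keys $k_1,k_2$ for the pattern $S$, and any message $m\in\mathbb{Z}_p^*$, the distribution of $\mathbf{Sign}(k_1,m)$ is equal to the distribution of $\mathbf{Sign}(k_2,m)$ (over the internal randomness of $\mathbf{Sign}$); that is, the two signature distributions are information-theoretically indistinguishable.
   Context: Patterns: for a prime $p$ and integer $\ell$, a pattern is $S\in(\mathbb{Z}_p^*\cup\{\bot\})^\ell$; $\mathrm{fixed}(S)=\{(i,S(i)):S(i)\neq\bot\}$, $\mathrm{free}(S)=\{i:S(i)=\bot\}$; $P$ matches $S$ if for all $i$, $P(i)=\bot$ or $P(i)=S(i)$. (In JEDI a (URI, time) pair is encoded as such a pattern.) Construction. Let $\mathbb{G}_1,\mathbb{G}_2,\mathbb{G}_T$ be cyclic groups of prime order $p$ with a bilinear map $e:\mathbb{G}_1\times\mathbb{G}_2\to\mathbb{G}_T$. $\mathbf{Setup}(1^\ell)$: choose $g\in\mathbb{G}_2$ and $g_2,g_3,h_1,\dots,h_\ell,h_s\in\mathbb{G}_1$ uniformly, $\alpha\in\mathbb{Z}_p$ uniformly, set $g_1=g^\alpha$; $\mathsf{Params}=(g,g_1,g_2,g_3,h_1,\dots,h_\ell,h_s)$ and $\mathsf{MasterKey}=g_2^\alpha$. Here $s$ is a special index, distinct from $1,\dots,\ell$, never fixed in a pattern. For a pattern $S$ write $Q_S=g_3\prod_{(i,a_i)\in\mathrm{fixed}(S)}h_i^{a_i}$.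 Keys are triples $(k_0,k_1,B)$ with $k_0\in\mathbb{G}_1$, $k_1\in\mathbb{G}_2$, and $B$ a set of pairs $(j,b_j)$, $b_j\in\mathbb{G}_1$. $\mathbf{KeyDer}$ from the master key to pattern $S$: sample $r\in\mathbb{Z}_p$ and output $(g_2^\alpha Q_S^r,\ g^r,\ \{(j,h_j^r)\}_{j\in\mathrm{free}(S)\cup\{s\}})$. $\mathbf{KeyDer}$ from a key $(k_0,k_1,B)$, $B=\{(i,b_i)\}$, to pattern $S$: sample $t\in\mathbb{Z}_p$ and output $\big(k_0\,Q_S^t\prod_{(i,a_i)\in\mathrm{fixed}(S),\,(i,b_i)\in B}b_i^{a_i},\ g^t k_1,\ \{(j,h_j^t b_j)\}_{j\in\mathrm{free}(S)\cup\{s\}}\big)$. A key for pattern $S$ is well-formed if it equals $(g_2^\alpha Q_S^{r_0},\ g^{r_0},\ \{(j,h_j^{r_0})\}_{j\in\mathrm{free}(S)\cup\{s\}})$ for some $r_0\in\mathbb{Z}_p$. Signing. $\mathbf{Sign}(K,m)$ for a key $K=(k_0,k_1,B)$ for pattern $S$ with $(s,b_s)\in B$ and $m\in\mathbb{Z}_p^*$: sample $t\in\mathbb{Z}_p$ and output $\big(k_0\,(Q_S\,h_s^m)^t\,b_s^m,\ g^t k_1\big)$. *)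

theory Defs
  imports "HOL-Probability.Probability_Mass_Function" "HOL-Algebra.FiniteProduct" "HOL-Algebra.Generated_Groups"
begin

(* Patterns of length l: lists of length l; entry Some a is a fixed component (a in Z_p^* ),
   None is the free symbol (bottom). Components are indexed 0..l-1. *)
type_synonym pattern = "nat option list"

(* key indices: position i (0-based) or the special signing index s *)
datatype idx = Pos nat | Spec

definition valid_pattern :: "nat \<Rightarrow> nat \<Rightarrow> pattern \<Rightarrow> bool" where
  "valid_pattern p l S \<longleftrightarrow> length S = l \<and> (\<forall>i<length S. \<forall>a. S ! i = Some a \<longrightarrow> a \<in> {1..<p})"

definition fixed_idx :: "pattern \<Rightarrow> nat set" where
  "fixed_idx S = {i. i < length S \<and> S ! i \<noteq> None}"

definition free_idx :: "pattern \<Rightarrow> nat set" where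
  "free_idx S = {i. i < length S \<and> S ! i = None}"

definition Q_pat :: "('a, 'm) monoid_scheme \<Rightarrow> 'a \<Rightarrow> (nat \<Rightarrow> 'a) \<Rightarrow> pattern \<Rightarrow> 'a" where
  "Q_pat G1 g3 h S = g3 \<otimes>\<^bsub>G1\<^esub> (\<Otimes>\<^bsub>G1\<^esub> i\<in>fixed_idx S. h i [^]\<^bsub>G1\<^esub> the (S ! i))"

type_synonym ('a, 'b) key = "'a \<times> 'b \<times> (idx \<Rightarrow> 'a option)"

definition wf_key_r :: "('a, 'm) monoid_scheme \<Rightarrow> ('b, 'n) monoid_scheme \<Rightarrow> 'b \<Rightarrow> 'a \<Rightarrow> nat
    \<Rightarrow> 'a \<Rightarrow> (nat \<Rightarrow> 'a) \<Rightarrow> 'a \<Rightarrow> pattern \<Rightarrow> nat \<Rightarrow> ('a, 'b) key" where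
  "wf_key_r G1 G2 g g2 \<alpha> g3 h hs S r0 =
     (g2 [^]\<^bsub>G1\<^esub> \<alpha> \<otimes>\<^bsub>G1\<^esub> Q_pat G1 g3 h S [^]\<^bsub>G1\<^esub> r0,
      g [^]\<^bsub>G2\<^esub> r0,
      (\<lambda>j. case j of Pos i \<Rightarrow> (if i \<in> free_idx S then Some (h i [^]\<^bsub>G1\<^esub> r0) else None)
                 | Spec \<Rightarrow> Some (hs [^]\<^bsub>G1\<^esub> r0)))"

definition well_formed_key :: "('a, 'm) monoid_scheme \<Rightarrow> ('b, 'n) monoid_scheme \<Rightarrow> nat \<Rightarrow> 'b \<Rightarrow> 'a \<Rightarrow> nat
    \<Rightarrow> 'a \<Rightarrow> (nat \<Rightarrow> 'a) \<Rightarrow> 'a \<Rightarrow> pattern \<Rightarrow> ('a, 'b) key \<Rightarrow> bool" where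
  "well_formed_key G1 G2 p g g2 \<alpha> g3 h hs S K \<longleftrightarrow> (\<exists>r0 \<in> {..<p}. K = wf_key_r G1 G2 g g2 \<alpha> g3 h hs S r0)"

definition sign_dist :: "('a, 'm) monoid_scheme \<Rightarrow> ('b, 'n) monoid_scheme \<Rightarrow> nat \<Rightarrow> 'b
    \<Rightarrow> 'a \<Rightarrow> (nat \<Rightarrow> 'a) \<Rightarrow> 'a \<Rightarrow> pattern \<Rightarrow> ('a, 'b) key \<Rightarrow> nat \<Rightarrow> ('a \<times> 'b) pmf" where
  "sign_dist G1 G2 p g g3 h hs S K m =
     (case K of (k0, k1, B) \<Rightarrow>
        map_pmf (\<lambda>t. (k0 \<otimes>\<^bsub>G1\<^esub> (Q_pat G1 g3 h S \<otimes>\<^bsub>G1\<^esub> hs [^]\<^bsub>G1\<^esub> m) [^]\<^bsub>G1\<^esub> t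
                        \<otimes>\<^bsub>G1\<^esub> the (B Spec) [^]\<^bsub>G1\<^esub> m,
                     g [^]\<^bsub>G2\<^esub> t \<otimes>\<^bsub>G2\<^esub> k1))
                (pmf_of_set {..<p}))"

definition prime_cyclic_group :: "('a, 'm) monoid_scheme \<Rightarrow> nat \<Rightarrow> bool" where
  "prime_cyclic_group G p \<longleftrightarrow> comm_group G \<and> finite (carrier G) \<and> card (carrier G) = p
     \<and> (\<exists>x\<in>carrier G. generate G {x} = carrier G)"

definition bilinear_map :: "('a, 'm) monoid_scheme \<Rightarrow> ('b, 'n) monoid_scheme \<Rightarrow> ('c, 'o) monoid_scheme
    \<Rightarrow> ('a \<Rightarrow> 'b \<Rightarrow> 'c) \<Rightarrow> bool" where
  "bilinear_map G1 G2 Gt e \<longleftrightarrow>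
     (\<forall>x\<in>carrier G1. \<forall>y\<in>carrier G2. e x y \<in> carrier Gt) \<and>
     (\<forall>x\<in>carrier G1. \<forall>x'\<in>carrier G1. \<forall>y\<in>carrier G2. e (x \<otimes>\<^bsub>G1\<^esub> x') y = e x y \<otimes>\<^bsub>Gt\<^esub> e x' y) \<and>
     (\<forall>x\<in>carrier G1. \<forall>y\<in>carrier G2. \<forall>y'\<in>carrier G2. e x (y \<otimes>\<^bsub>G2\<^esub> y') = e x y \<otimes>\<^bsub>Gt\<^esub> e x y')"

end

theory Submission
  imports Defs "HOL-Algebra.Multiplicative_Group" "HOL-Number_Theory.Cong"
begin

lemma pow_mod_order:
  fixes G (structure)
  assumes "group G" "card (carrier G) = p" "x \<in> carrier G"
  shows "x [^]\<^bsub>G\<^esub> (n::nat) = x [^]\<^bsub>G\<^esub> (n mod p)"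
proof -
  interpret group G by fact
  have 1: "x [^] p = \<one>" using pow_order_eq_1[OF assms(3)] assms(2) by (simp add: order_def)
  have "x [^] n = x [^] (p * (n div p) + n mod p)" by simp
  also have "\<dots> = (x [^] p) [^] (n div p) \<otimes> x [^] (n mod p)"
    using assms(3) by (simp only: nat_pow_mult[symmetric] nat_pow_pow[symmetric] nat_pow_closed)
  also have "\<dots> = x [^] (n mod p)" using 1 assms(3) by simp
  finally show ?thesis .
qed

lemma shift_uniform:
  assumes "(p::nat) > 0"
  shows "map_pmf (\<lambda>t. F ((r + t) mod p)) (pmf_of_set {..<p}) = map_pmf F (pmf_of_set {..<p})"
proof -
  let ?f = "\<lambda>t. (r + t) mod p"
  have inj: "inj_on ?f {..<p}"
  proof (rule inj_onI)
    fix a b assume "a \<in> {..<p}" "b \<in> {..<p}" "?f a = ?f b"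
    then have "[r + a = r + b] (mod p)" by (simp add: cong_def)
    then have "[a = b] (mod p)" by (simp add: cong_add_lcancel_nat)
    with \<open>a \<in> {..<p}\<close> \<open>b \<in> {..<p}\<close> show "a = b" by (simp add: cong_def)
  qed
  have img: "?f ` {..<p} = {..<p}"
    using inj assms by (intro endo_inj_surj) auto
  have "map_pmf (\<lambda>t. F ((r + t) mod p)) (pmf_of_set {..<p}) = map_pmf F (map_pmf ?f (pmf_of_set {..<p}))"
    by (simp add: pmf.map_comp o_def)
  also have "map_pmf ?f (pmf_of_set {..<p}) = pmf_of_set {..<p}"
    using map_pmf_of_set_inj[OF inj] img assms by auto
  finally show ?thesis .
qed

theorem theorem2:
  fixes G1 :: "('a, 'm) monoid_scheme" and G2 :: "('b, 'n) monoid_scheme"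
    and Gt :: "('c, 'o) monoid_scheme" and e :: "'a \<Rightarrow> 'b \<Rightarrow> 'c"
    and p l :: nat and g g1 :: 'b and g2 g3 hs :: 'a and h :: "nat \<Rightarrow> 'a" and \<alpha> :: nat
    and S :: pattern and K1 K2 :: "('a, 'b) key" and m :: nat
  assumes "prime p"
    and "prime_cyclic_group G1 p" and "prime_cyclic_group G2 p" and "prime_cyclic_group Gt p"
    and "bilinear_map G1 G2 Gt e"
    and "g \<in> carrier G2" and "g2 \<in> carrier G1" and "g3 \<in> carrier G1" and "hs \<in> carrier G1"
    and "\<forall>i<l. h i \<in> carrier G1"
    and "\<alpha> < p" and "g1 = g [^]\<^bsub>G2\<^esub> \<alpha>"
    and "valid_pattern p l S"
    and "well_formed_key G1 G2 p g g2 \<alpha> g3 h hs S K1"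
    and "well_formed_key G1 G2 p g g2 \<alpha> g3 h hs S K2"
    and "m \<in> {1..<p}"
  shows "sign_dist G1 G2 p g g3 h hs S K1 m = sign_dist G1 G2 p g g3 h hs S K2 m"
proof -
  have p0: "p > 0" using assms(1) prime_gt_0_nat by blast
  have cg1: "comm_group G1" and c1: "card (carrier G1) = p"
    using assms(2) by (auto simp: prime_cyclic_group_def)
  have cg2: "comm_group G2" and c2: "card (carrier G2) = p"
    using assms(3) by (auto simp: prime_cyclic_group_def)
  interpret A: comm_group G1 by (rule cg1)
  interpret B: comm_group G2 by (rule cg2)
  have Qc: "Q_pat G1 g3 h S \<in> carrier G1"
  proof -
    have "\<forall>i\<in>fixed_idx S. h i \<in> carrier G1"
      using assms(10,13) by (auto simp: fixed_idx_def valid_pattern_def)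
    then show ?thesis using assms(8) unfolding Q_pat_def
      by (intro A.m_closed A.finprod_closed) (auto simp: Pi_def)
  qed
  define Q where "Q = Q_pat G1 g3 h S"
  define R where "R = Q \<otimes>\<^bsub>G1\<^esub> hs [^]\<^bsub>G1\<^esub> m"
  have Rc: "R \<in> carrier G1" using Qc assms(9) by (simp add: R_def Q_def)
  define F where "F = (\<lambda>u::nat. (g2 [^]\<^bsub>G1\<^esub> \<alpha> \<otimes>\<^bsub>G1\<^esub> R [^]\<^bsub>G1\<^esub> u, g [^]\<^bsub>G2\<^esub> u))"
  have key: "sign_dist G1 G2 p g g3 h hs S (wf_key_r G1 G2 g g2 \<alpha> g3 h hs S r) m
      = map_pmf F (pmf_of_set {..<p})" for r
  proof -
    have eq: "(g2 [^]\<^bsub>G1\<^esub> \<alpha> \<otimes>\<^bsub>G1\<^esub> Q [^]\<^bsub>G1\<^esub> r \<otimes>\<^bsub>G1\<^esub> R [^]\<^bsub>G1\<^esub> t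
                        \<otimes>\<^bsub>G1\<^esub> (hs [^]\<^bsub>G1\<^esub> r) [^]\<^bsub>G1\<^esub> m,
                     g [^]\<^bsub>G2\<^esub> t \<otimes>\<^bsub>G2\<^esub> g [^]\<^bsub>G2\<^esub> r) = F ((r + t) mod p)" for t
    proof -
      have "R [^]\<^bsub>G1\<^esub> (r + t) = Q [^]\<^bsub>G1\<^esub> r \<otimes>\<^bsub>G1\<^esub> R [^]\<^bsub>G1\<^esub> t \<otimes>\<^bsub>G1\<^esub> (hs [^]\<^bsub>G1\<^esub> r) [^]\<^bsub>G1\<^esub> m"
      proof -
        have "R [^]\<^bsub>G1\<^esub> (r + t) = R [^]\<^bsub>G1\<^esub> r \<otimes>\<^bsub>G1\<^esub> R [^]\<^bsub>G1\<^esub> t"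
          using Rc by (simp add: A.nat_pow_mult)
        also have "R [^]\<^bsub>G1\<^esub> r = Q [^]\<^bsub>G1\<^esub> r \<otimes>\<^bsub>G1\<^esub> (hs [^]\<^bsub>G1\<^esub> r) [^]\<^bsub>G1\<^esub> m"
          using Qc assms(9) unfolding R_def Q_def
          by (simp add: A.pow_mult_distrib A.m_comm A.nat_pow_pow mult.commute)
        finally show ?thesis using Qc Rc assms(9) unfolding Q_def
          by (simp add: A.m_ac)
      qed
      moreover have "g [^]\<^bsub>G2\<^esub> t \<otimes>\<^bsub>G2\<^esub> g [^]\<^bsub>G2\<^esub> r = g [^]\<^bsub>G2\<^esub> (r + t)"
        using assms(6) by (simp add: B.nat_pow_mult add.commute)
      ultimately show ?thesis unfolding F_def
        using pow_mod_order[OF A.is_group c1 Rc, of "r + t"]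
          pow_mod_order[OF B.is_group c2 assms(6), of "r + t"]
        using Qc Rc assms(7,9) unfolding Q_def by (simp add: A.m_assoc)
    qed
    show ?thesis
      unfolding sign_dist_def wf_key_r_def
      using eq shift_uniform[OF p0, of F r] by (simp add: Q_def R_def)
  qed
  obtain r1 where "K1 = wf_key_r G1 G2 g g2 \<alpha> g3 h hs S r1"
    using assms(14) by (auto simp: well_formed_key_def)
  moreover obtain r2 where "K2 = wf_key_r G1 G2 g g2 \<alpha> g3 h hs S r2"
    using assms(15) by (auto simp: well_formed_key_def)
  ultimately show ?thesis using key by simp
qed

end
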